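(* Let $M$ be a free $\mathbb{T}$-module with a finite $\mathbb{T}$-basis $\{\widehat m_1,\dots,\widehat m_n\}$, let $V=\{\sum_{l=1}^n x_l\widehat m_l : x_l\in\mathbb{C}(\mathbf{i_1})\}\subset M$, and let $(V^2,+_{V^2},\cdot_{V^2})$ be the $\mathbb{T}$-module defined below. Let $\{\widehat v_1,\dots,\widehat v_n\}$ be a basis of the vector space $V$ over $\mathbb{C}(\mathbf{i_1})$. Then $\{(\widehat v_l;\widehat v_l): l=1,\dots,n\}$ is a basis of the $\mathbb{T}$-module $V^2$ (so $V^2$ is free), and $\{\widehat v_1,\dots,\widehat v_n\}$ is a $\mathbb{T}$-basis of $M$.
   Context: Bicomplex numbers: $\mathbb{T}=\{z_1+z_2\mathbf{i_2}: z_1,z_2\in\mathbb{C}(\mathbf{i_1})\}$, where $\mathbb{C}(\mathbf{i_1})=\{x+y\mathbf{i_1}: x,y\in\mathbb{R}\}$, with $\mathbf{i_1}^2=\mathbf{i_2}^2=-1$, $\mathbf{i_1}\mathbf{i_2}=\mathbf{i_2}\mathbf{i_1}=\mathbf{j}$, $\mathbf{j}^2=1$; $\mathbb{T}$ is a commutative ring. The idempotents are $\mathbf{e_1}=(1+\mathbf{j})/2$, $\mathbf{e_2}=(1-\mathbf{j})/2$, with $\mathbf{e_1}^2=\mathbf{e_1}$, $\mathbf{e_2}^2=\mathbf{e_2}$, $\mathbf{e_1}\mathbf{e_2}=0$, $\mathbf{e_1}+\mathbf{e_2}=1$; every $\lambda\in\mathbb{T}$ is uniquely $\lambda=\lambda_1\mathbf{e_1}+\lambda_2\mathbf{e_2}$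 with $\lambda_1,\lambda_2\in\mathbb{C}(\mathbf{i_1})$. $V^2=\{(\widehat X;\widehat Y): \widehat X,\widehat Y\in V\}$ with addition $(\widehat X_1;\widehat Y_1)+_{V^2}(\widehat X_2;\widehat Y_2)=(\widehat X_1+\widehat X_2;\widehat Y_1+\widehat Y_2)$ and scalar multiplication $\lambda\cdot_{V^2}(\widehat X;\widehat Y)=(\lambda_1\widehat X;\lambda_2\widehat Y)$ for $\lambda=\lambda_1\mathbf{e_1}+\lambda_2\mathbf{e_2}$. *)

theory Defs
  imports Complex_Main "HOL-Library.Product_Plus"
begin

datatype bicomplex = Bicomplex (bc1: complex) (bc2: complex)
  \<comment> \<open>Bicomplex z1 z2 represents z1 + z2 i2, with C(i1) modelled by Isabelle's complex (i1 = \<i>)\<close>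

instantiation bicomplex :: comm_ring_1
begin
definition "0 = Bicomplex 0 0"
definition "1 = Bicomplex 1 0"
definition "x + y = Bicomplex (bc1 x + bc1 y) (bc2 x + bc2 y)"
definition "x - y = Bicomplex (bc1 x - bc1 y) (bc2 x - bc2 y)"
definition "- x = Bicomplex (- bc1 x) (- bc2 x)"
definition "x * y = Bicomplex (bc1 x * bc1 y - bc2 x * bc2 y) (bc1 x * bc2 y + bc2 x * bc1 y)"
instance
  by standard (auto simp: zero_bicomplex_def one_bicomplex_def plus_bicomplex_def
      minus_bicomplex_def uminus_bicomplex_def times_bicomplex_def algebra_simps
      intro: bicomplex.expand)
end

definition bc_of_complex :: "complex \<Rightarrow> bicomplex" where
  "bc_of_complex z = Bicomplex z 0"

definition bc_i1 :: bicomplex where "bc_i1 = Bicomplex \<i> 0"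
definition bc_i2 :: bicomplex where "bc_i2 = Bicomplex 0 1"
definition bc_j :: bicomplex where "bc_j = bc_i1 * bc_i2"

definition bc_e1 :: bicomplex where "bc_e1 = bc_of_complex (1/2) * (1 + bc_j)"
definition bc_e2 :: bicomplex where "bc_e2 = bc_of_complex (1/2) * (1 - bc_j)"

definition idem_comps :: "bicomplex \<Rightarrow> complex \<times> complex" where
  "idem_comps lam = (THE p. lam = bc_of_complex (fst p) * bc_e1 + bc_of_complex (snd p) * bc_e2)"

definition idem1 :: "bicomplex \<Rightarrow> complex" where "idem1 lam = fst (idem_comps lam)"
definition idem2 :: "bicomplex \<Rightarrow> complex" where "idem2 lam = snd (idem_comps lam)"

definition cscale :: "(bicomplex \<Rightarrow> 'm \<Rightarrow> 'm) \<Rightarrow> complex \<Rightarrow> 'm \<Rightarrow> 'm" where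
  "cscale smul c x = smul (bc_of_complex c) x"

definition Vspace :: "(bicomplex \<Rightarrow> 'm::ab_group_add \<Rightarrow> 'm) \<Rightarrow> (nat \<Rightarrow> 'm) \<Rightarrow> nat \<Rightarrow> 'm set" where
  "Vspace smul m n = {(\<Sum>l\<in>{1..n}. smul (bc_of_complex (x l)) (m l)) | x. True}"

text \<open>Addition on V^2 is componentwise (that of the product type).
  It is defined on all of M x M; V^2 = V x V is the relevant carrier.\<close>
definition v2smul :: "(bicomplex \<Rightarrow> 'm \<Rightarrow> 'm) \<Rightarrow> bicomplex \<Rightarrow> 'm \<times> 'm \<Rightarrow> 'm \<times> 'm" where
  "v2smul smul lam XY = (cscale smul (idem1 lam) (fst XY), cscale smul (idem2 lam) (snd XY))"

end

theory Submission
  imports Defs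
begin

lemma bc_e1: "bc_e1 = Bicomplex (1/2) (\<i>/2)"
  by (simp add: bc_e1_def bc_j_def bc_i1_def bc_i2_def bc_of_complex_def times_bicomplex_def plus_bicomplex_def one_bicomplex_def)
lemma bc_e2: "bc_e2 = Bicomplex (1/2) (-\<i>/2)"
  by (simp add: bc_e2_def bc_j_def bc_i1_def bc_i2_def bc_of_complex_def times_bicomplex_def minus_bicomplex_def one_bicomplex_def)

lemma idem_decomp: "lam = bc_of_complex a * bc_e1 + bc_of_complex b * bc_e2 \<longleftrightarrow>
   (a = bc1 lam - \<i> * bc2 lam \<and> b = bc1 lam + \<i> * bc2 lam)"
proof (cases lam)
  case (Bicomplex x1 x2)
  have "lam = bc_of_complex a * bc_e1 + bc_of_complex b * bc_e2 \<longleftrightarrow> x1 = (a+b)/2 \<and> x2 = \<i>*(a-b)/2"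
    by (simp add: Bicomplex bc_e1 bc_e2 bc_of_complex_def times_bicomplex_def plus_bicomplex_def field_simps)
  also have "\<dots> \<longleftrightarrow> a = x1 - \<i> * x2 \<and> b = x1 + \<i> * x2"
  proof
    assume "x1 = (a+b)/2 \<and> x2 = \<i>*(a-b)/2"
    then have x1: "x1 = (a+b)/2" and x2: "x2 = \<i>*(a-b)/2" by auto
    have h: "\<i>*x2 = -(a-b)/2" unfolding x2 by (simp add: mult.assoc[symmetric])
    have "x1 - \<i> * x2 = a" "x1 + \<i> * x2 = b" by (simp_all only: x1 h) (simp_all add: field_simps)
    then show "a = x1 - \<i> * x2 \<and> b = x1 + \<i> * x2" by simp
  next
    assume "a = x1 - \<i> * x2 \<and> b = x1 + \<i> * x2"
    then show "x1 = (a+b)/2 \<and> x2 = \<i>*(a-b)/2" by (auto simp: field_simps)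
  qed
  finally show ?thesis by (simp add: Bicomplex)
qed

lemma idem_comps_eq: "idem_comps lam = (bc1 lam - \<i> * bc2 lam, bc1 lam + \<i> * bc2 lam)"
  unfolding idem_comps_def by (rule the_equality) (auto simp: idem_decomp)

lemma idem1_eq: "idem1 lam = bc1 lam - \<i> * bc2 lam"
  by (simp add: idem1_def idem_comps_eq)
lemma idem2_eq: "idem2 lam = bc1 lam + \<i> * bc2 lam"
  by (simp add: idem2_def idem_comps_eq)

lemma idem_recon: "lam = bc_of_complex (idem1 lam) * bc_e1 + bc_of_complex (idem2 lam) * bc_e2"
  by (simp add: idem_decomp idem1_eq idem2_eq)

lemma idem1_of: "idem1 (bc_of_complex a * bc_e1 + bc_of_complex b * bc_e2) = a"
  and idem2_of: "idem2 (bc_of_complex a * bc_e1 + bc_of_complex b * bc_e2) = b"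
  using idem_decomp[of "bc_of_complex a * bc_e1 + bc_of_complex b * bc_e2" a b]
  by (simp_all add: idem1_eq idem2_eq)

lemma idem1_add: "idem1 (x + y) = idem1 x + idem1 y"
  and idem2_add: "idem2 (x + y) = idem2 x + idem2 y"
  and idem1_mult: "idem1 (x * y) = idem1 x * idem1 y"
  and idem2_mult: "idem2 (x * y) = idem2 x * idem2 y"
  and idem1_one: "idem1 1 = 1" and idem2_one: "idem2 1 = 1"
  and idem1_zero: "idem1 0 = 0" and idem2_zero: "idem2 0 = 0"
  and idem1_bc: "idem1 (bc_of_complex c) = c" and idem2_bc: "idem2 (bc_of_complex c) = c"
  by (simp_all add: idem1_eq idem2_eq plus_bicomplex_def times_bicomplex_def one_bicomplex_def
      zero_bicomplex_def bc_of_complex_def algebra_simps)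

lemma idem_zero: "idem1 x = 0 \<Longrightarrow> idem2 x = 0 \<Longrightarrow> x = 0"
  by (subst idem_recon) (simp add: bc_of_complex_def zero_bicomplex_def times_bicomplex_def plus_bicomplex_def)

lemma bc_add: "bc_of_complex (a + b) = bc_of_complex a + bc_of_complex b"
  and bc_mult: "bc_of_complex (a * b) = bc_of_complex a * bc_of_complex b"
  and bc_one: "bc_of_complex 1 = 1" and bc_zero: "bc_of_complex 0 = 0"
  by (simp_all add: plus_bicomplex_def times_bicomplex_def one_bicomplex_def
      zero_bicomplex_def bc_of_complex_def)

lemma idem1_sum: "idem1 (sum f A) = (\<Sum>a\<in>A. idem1 (f a))"
  by (induction A rule: infinite_finite_induct) (simp_all add: idem1_zero idem1_add)
lemma idem2_sum: "idem2 (sum f A) = (\<Sum>a\<in>A. idem2 (f a))"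
  by (induction A rule: infinite_finite_induct) (simp_all add: idem2_zero idem2_add)
lemma bc_sum: "bc_of_complex (sum f A) = (\<Sum>a\<in>A. bc_of_complex (f a))"
  by (induction A rule: infinite_finite_induct) (simp_all add: bc_zero bc_add)


lemma cscale_module: assumes "module smul" shows "module (cscale smul)"
proof -
  interpret M: module smul by (rule assms)
  show ?thesis
    by unfold_locales (simp_all add: cscale_def bc_add bc_mult bc_one M.scale_right_distrib M.scale_left_distrib)
qed

lemma v2_module: assumes "module smul" shows "module (v2smul smul)"
proof -
  interpret C: module "cscale smul" by (rule cscale_module[OF assms])
  show ?thesis
    by unfold_locales (simp_all add: v2smul_def idem1_add idem2_add idem1_mult idem2_mult idem1_one idem2_one
       C.scale_right_distrib C.scale_left_distrib)
qed

theorem mainTheorem4: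
  fixes smul :: "bicomplex \<Rightarrow> 'm::ab_group_add \<Rightarrow> 'm"
    and m v :: "nat \<Rightarrow> 'm" and n :: nat
  assumes M_module: "module smul"
    and m_basis: "inj_on m {1..n}" "\<not> module.dependent smul (m ` {1..n})"
      "module.span smul (m ` {1..n}) = UNIV"
    and v_in_V: "v ` {1..n} \<subseteq> Vspace smul m n"
    and v_basis: "inj_on v {1..n}" "\<not> module.dependent (cscale smul) (v ` {1..n})"
      "module.span (cscale smul) (v ` {1..n}) = Vspace smul m n"
  shows "module (v2smul smul)
      \<and> inj_on (\<lambda>l. (v l, v l)) {1..n}
      \<and> \<not> module.dependent (v2smul smul) ((\<lambda>l. (v l, v l)) ` {1..n})
      \<and> module.span (v2smul smul) ((\<lambda>l. (v l, v l)) ` {1..n})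
          = Vspace smul m n \<times> Vspace smul m n
      \<and> \<not> module.dependent smul (v ` {1..n})
      \<and> module.span smul (v ` {1..n}) = UNIV"
proof -
  interpret M: module smul by (rule M_module)
  interpret C: module "cscale smul" by (rule cscale_module[OF M_module])
  interpret P: module "v2smul smul" by (rule v2_module[OF M_module])
  define B where "B = v ` {1..n}"
  define V where "V = Vspace smul m n"
  have finB: "finite B" unfolding B_def by simp
  have BV: "B \<subseteq> V" using v_in_V unfolding B_def V_def .
  have VC: "C.span B = V" using v_basis(3) unfolding B_def V_def .
  have Bind: "C.independent B" using v_basis(2) unfolding B_def .
  have diag: "(\<lambda>l. (v l, v l)) ` {1..n} = (\<lambda>w. (w, w)) ` B" unfolding B_def by (simp add: image_image)
  have injd: "inj_on (\<lambda>w. (w, w)) B" by (auto simp: inj_on_def)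
  have "\<forall>w\<in>V. \<exists>c. w = (\<Sum>k\<in>{1..n}. smul (bc_of_complex (c k)) (m k))"
    unfolding V_def Vspace_def by blast
  then obtain cf where cf: "\<And>w. w \<in> V \<Longrightarrow> w = (\<Sum>k\<in>{1..n}. smul (bc_of_complex (cf w k)) (m k))"
    by metis
  have mind: "\<And>k. k \<in> {1..n} \<Longrightarrow> g k = 0" if g: "(\<Sum>k\<in>{1..n}. smul (g k) (m k)) = 0" for g
  proof -
    fix k assume k: "k \<in> {1..n}"
    let ?u = "\<lambda>x. g (inv_into {1..n} m x)"
    have "(\<Sum>x\<in>m ` {1..n}. smul (?u x) x) = (\<Sum>k\<in>{1..n}. smul (?u (m k)) (m k))"
      by (rule sum.reindex[OF m_basis(1), unfolded comp_def])
    also have "\<dots> = 0" using g m_basis(1) by (simp add: inv_into_f_f)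
    finally have "?u (m k) = 0"
      using M.independentD[OF m_basis(2), of "m ` {1..n}" ?u "m k"] k by simp
    then show "g k = 0" using m_basis(1) k by (simp add: inv_into_f_f)
  qed
  have expand: "(\<Sum>w\<in>B. smul (u w) w) = (\<Sum>k\<in>{1..n}. smul (\<Sum>w\<in>B. u w * bc_of_complex (cf w k)) (m k))" for u
  proof -
    have "(\<Sum>w\<in>B. smul (u w) w) = (\<Sum>w\<in>B. smul (u w) (\<Sum>k\<in>{1..n}. smul (bc_of_complex (cf w k)) (m k)))"
      using BV cf by (intro sum.cong) auto
    also have "\<dots> = (\<Sum>w\<in>B. \<Sum>k\<in>{1..n}. smul (u w * bc_of_complex (cf w k)) (m k))"
      by (simp add: M.scale_sum_right)
    also have "\<dots> = (\<Sum>k\<in>{1..n}. \<Sum>w\<in>B. smul (u w * bc_of_complex (cf w k)) (m k))"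
      by (rule sum.swap)
    also have "\<dots> = (\<Sum>k\<in>{1..n}. smul (\<Sum>w\<in>B. u w * bc_of_complex (cf w k)) (m k))"
      by (simp add: M.scale_sum_left)
    finally show ?thesis .
  qed
  have Mind: "M.independent B"
  proof
    assume "M.dependent B"
    then obtain u where u: "\<exists>w\<in>B. u w \<noteq> 0" "(\<Sum>w\<in>B. smul (u w) w) = 0"
      using M.dependent_finite[OF finB] by blast
    have g0: "(\<Sum>w\<in>B. u w * bc_of_complex (cf w k)) = 0" if "k \<in> {1..n}" for k
      using mind[of "\<lambda>k. \<Sum>w\<in>B. u w * bc_of_complex (cf w k)"] u(2) expand[of u] that by simp
    have key: "\<forall>w\<in>B. \<phi> (u w) = 0"
      if h1: "\<And>x y. \<phi> (x*y) = \<phi> x * \<phi> y" and h2: "\<And>f (A::'m set). \<phi> (sum f A) = (\<Sum>a\<in>A. \<phi> (f a))"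
        and h3: "\<And>c. \<phi> (bc_of_complex c) = c" and h4: "\<phi> 0 = 0" for \<phi>
    proof -
      have "(\<Sum>w\<in>B. cscale smul (\<phi> (u w)) w)
          = (\<Sum>k\<in>{1..n}. smul (\<Sum>w\<in>B. bc_of_complex (\<phi> (u w)) * bc_of_complex (cf w k)) (m k))"
        unfolding cscale_def by (rule expand)
      also have "\<dots> = (\<Sum>k\<in>{1..n}. smul (bc_of_complex (\<phi> (\<Sum>w\<in>B. u w * bc_of_complex (cf w k)))) (m k))"
      proof (rule sum.cong[OF refl])
        fix k
        have "\<phi> (\<Sum>w\<in>B. u w * bc_of_complex (cf w k)) = (\<Sum>w\<in>B. \<phi> (u w) * cf w k)"
          by (subst h2, rule sum.cong[OF refl], subst h1, subst h3, rule refl)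
        then show "smul (\<Sum>w\<in>B. bc_of_complex (\<phi> (u w)) * bc_of_complex (cf w k)) (m k) =
          smul (bc_of_complex (\<phi> (\<Sum>w\<in>B. u w * bc_of_complex (cf w k)))) (m k)"
          by (simp only: bc_sum bc_mult)
      qed
      also have "\<dots> = 0" by (intro sum.neutral ballI) (simp add: g0 h4 bc_zero)
      finally have "(\<Sum>w\<in>B. cscale smul (\<phi> (u w)) w) = 0" .
      from C.independentD[OF Bind finB order_refl this] show ?thesis by blast
    qed
    have "\<forall>w\<in>B. idem1 (u w) = 0"
      by (rule key) (simp_all add: idem1_mult idem1_sum idem1_bc idem1_zero)
    moreover have "\<forall>w\<in>B. idem2 (u w) = 0"
      by (rule key) (simp_all add: idem2_mult idem2_sum idem2_bc idem2_zero)
    ultimately show False using u(1) idem_zero by blast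
  qed
  have mV: "m ` {1..n} \<subseteq> V"
  proof
    fix x assume "x \<in> m ` {1..n}"
    then obtain k where k: "k \<in> {1..n}" "x = m k" by auto
    have "(\<Sum>l\<in>{1..n}. smul (bc_of_complex (if l = k then 1 else 0)) (m l)) = (\<Sum>l\<in>{1..n}. if l = k then m l else 0)"
      by (intro sum.cong) (auto simp: bc_one bc_zero)
    also have "\<dots> = m k" using k by simp
    finally show "x \<in> V" unfolding V_def Vspace_def using k
      by (intro CollectI exI[of _ "\<lambda>l. if l = k then 1 else 0"]) simp
  qed
  have CM: "C.span B \<subseteq> M.span B"
  proof (rule C.span_minimal)
    show "B \<subseteq> M.span B" by (rule M.span_superset)
    show "C.subspace (M.span B)"
      unfolding C.subspace_def cscale_def by (auto intro: M.span_zero M.span_add M.span_scale)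
  qed
  have Mspan: "M.span B = UNIV"
  proof -
    have "m ` {1..n} \<subseteq> M.span B" using mV VC CM by blast
    then have "M.span (m ` {1..n}) \<subseteq> M.span B" using M.span_minimal M.subspace_span by blast
    then show ?thesis using m_basis(3) by blast
  qed
  have Pind: "P.independent ((\<lambda>w. (w, w)) ` B)"
  proof
    assume "P.dependent ((\<lambda>w. (w, w)) ` B)"
    then obtain u where u: "\<exists>p\<in>(\<lambda>w. (w, w)) ` B. u p \<noteq> 0" "(\<Sum>p\<in>(\<lambda>w. (w, w)) ` B. v2smul smul (u p) p) = 0"
      using P.dependent_finite[of "(\<lambda>w. (w, w)) ` B"] finB by blast
    have "(\<Sum>w\<in>B. v2smul smul (u (w,w)) (w,w)) = 0"
      using u(2) by (simp add: sum.reindex[OF injd])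
    then have s1: "(\<Sum>w\<in>B. cscale smul (idem1 (u (w,w))) w) = 0"
         and s2: "(\<Sum>w\<in>B. cscale smul (idem2 (u (w,w))) w) = 0"
      by (auto simp: prod_eq_iff fst_sum snd_sum v2smul_def)
    have "\<forall>w\<in>B. idem1 (u (w,w)) = 0" using C.independentD[OF Bind finB order_refl s1] by blast
    moreover have "\<forall>w\<in>B. idem2 (u (w,w)) = 0" using C.independentD[OF Bind finB order_refl s2] by blast
    ultimately show False using u(1) idem_zero by blast
  qed
  have Pspan: "P.span ((\<lambda>w. (w, w)) ` B) = V \<times> V"
  proof
    show "P.span ((\<lambda>w. (w, w)) ` B) \<subseteq> V \<times> V"
    proof (rule P.span_minimal)
      show "(\<lambda>w. (w, w)) ` B \<subseteq> V \<times> V" using BV by auto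
      have sV: "C.subspace V" using VC C.subspace_span by blast
      show "P.subspace (V \<times> V)"
        using sV unfolding P.subspace_def C.subspace_def by (auto simp: v2smul_def mem_Times_iff)
    qed
  next
    show "V \<times> V \<subseteq> P.span ((\<lambda>w. (w, w)) ` B)"
    proof
      fix p assume "p \<in> V \<times> V"
      then obtain x y where p: "p = (x, y)" "x \<in> C.span B" "y \<in> C.span B" using VC by auto
      obtain a where a: "x = (\<Sum>w\<in>B. cscale smul (a w) w)" using p(2) C.span_finite[OF finB] by auto
      obtain b where b: "y = (\<Sum>w\<in>B. cscale smul (b w) w)" using p(3) C.span_finite[OF finB] by auto
      let ?l = "\<lambda>w. bc_of_complex (a w) * bc_e1 + bc_of_complex (b w) * bc_e2"
      have "p = (\<Sum>w\<in>B. v2smul smul (?l w) (w, w))"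
        unfolding p(1) a b by (simp add: prod_eq_iff fst_sum snd_sum v2smul_def idem1_of idem2_of)
      also have "\<dots> \<in> P.span ((\<lambda>w. (w, w)) ` B)"
        by (intro P.span_sum P.span_scale P.span_base) auto
      finally show "p \<in> P.span ((\<lambda>w. (w, w)) ` B)" .
    qed
  qed
  have injv: "inj_on (\<lambda>l. (v l, v l)) {1..n}"
  proof (rule inj_onI)
    fix x y assume xy: "x \<in> {1..n}" "y \<in> {1..n}" "(v x, v x) = (v y, v y)"
    then have "v x = v y" by simp
    with inj_onD[OF v_basis(1)] xy(1,2) show "x = y" by blast
  qed
  show ?thesis
    unfolding diag B_def[symmetric] V_def[symmetric]
    using v2_module[OF M_module] injv Pind Pspan Mind Mspan by (intro conjI) assumption+
qed

end
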